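(* Let a partial coloring of an $n\times n$ square with colors from $\{1,\dots,2n-2\}$ uniquely extend to $L(n,2n-2)$, and let $a,b,c$ be colors. Then there are no indices $k,l$ such that either (i) $(k+1,l+1)$, $(k+1,l+2)$, $(k+2,l+2)$, $(k+2,l+3)$ are all uncolored and $a(k+1,l+1)=\{a\}$, $a(k+1,l+2)=\{a,b\}$, $a(k+2,l+2)=\{b,c\}$; or (ii) $(k+3,l+2)$, $(k+2,l+2)$, $(k+2,l+1)$, $(k+1,l+1)$ are all uncolored and $a(k+3,l+2)=\{a\}$, $a(k+2,l+2)=\{a,b\}$, $a(k+2,l+1)=\{b,c\}$.
   Context: For positive integers $n,k$, let $\mathcal{L}_{n,k}$ be the set of $n\times n$ squares all of whose entries are colored with colors from a fixed set of $k$ colors $\{1,\dots,k\}$ such that any two entries in the same row, or in the same column, have different colors. Entries are indexed $(i,j)$, $i$ the row and $j$ the column. A partial coloring of an $n\times n$ square assigns colors from $\{1,\dots,k\}$ to some of its entries; the remaining entries are called uncolored. A partial coloring extends to $L(n,k)$ if the uncolored entries can be colored so that the resulting fully colored square lies in $\mathcal{L}_{n,k}$ (keeping the given colors), and it uniquely extends to $L(n,k)$ if there is exactly one such way. For an uncolored entry $(i,j)$ in a partial coloring with $k$ colors, $a(i,j)$ (the set of available colors) is the set of colors in $\{1,\dots,k\}$ that are not the color of any colored entry in row $i$ or column $j$. *)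

theory Defs
  imports Main
begin

text \<open>A partial coloring is a map P :: nat \<Rightarrow> nat \<Rightarrow> nat option; P i j = None
  means entry (i,j) is uncolored.  A full coloring is F :: nat \<Rightarrow> nat \<Rightarrow> nat
  (values outside the square are irrelevant).\<close>

definition entry :: "nat \<Rightarrow> nat \<Rightarrow> nat \<Rightarrow> bool" where
  "entry n i j \<longleftrightarrow> 1 \<le> i \<and> i \<le> n \<and> 1 \<le> j \<and> j \<le> n"

definition partial_coloring :: "nat \<Rightarrow> nat \<Rightarrow> (nat \<Rightarrow> nat \<Rightarrow> nat option) \<Rightarrow> bool" where
  "partial_coloring n k P \<longleftrightarrow>
     (\<forall>i j c. P i j = Some c \<longrightarrow> entry n i j \<and> c \<in> {1..k})"

definition in_L :: "nat \<Rightarrow> nat \<Rightarrow> (nat \<Rightarrow> nat \<Rightarrow> nat) \<Rightarrow> bool" where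
  "in_L n k F \<longleftrightarrow>
     (\<forall>i j. entry n i j \<longrightarrow> F i j \<in> {1..k}) \<and>
     (\<forall>i j j'. entry n i j \<and> entry n i j' \<and> j \<noteq> j' \<longrightarrow> F i j \<noteq> F i j') \<and>
     (\<forall>i i' j. entry n i j \<and> entry n i' j \<and> i \<noteq> i' \<longrightarrow> F i j \<noteq> F i' j)"

definition is_extension :: "nat \<Rightarrow> nat \<Rightarrow> (nat \<Rightarrow> nat \<Rightarrow> nat option) \<Rightarrow> (nat \<Rightarrow> nat \<Rightarrow> nat) \<Rightarrow> bool" where
  "is_extension n k P F \<longleftrightarrow> in_L n k F \<and> (\<forall>i j c. P i j = Some c \<longrightarrow> F i j = c)"

text \<open>Exactly one extension (two extensions are identified iff they agree on the square).\<close>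
definition uniquely_extends :: "nat \<Rightarrow> nat \<Rightarrow> (nat \<Rightarrow> nat \<Rightarrow> nat option) \<Rightarrow> bool" where
  "uniquely_extends n k P \<longleftrightarrow>
     (\<exists>F. is_extension n k P F \<and>
          (\<forall>G. is_extension n k P G \<longrightarrow> (\<forall>i j. entry n i j \<longrightarrow> G i j = F i j)))"

definition avail :: "nat \<Rightarrow> nat \<Rightarrow> (nat \<Rightarrow> nat \<Rightarrow> nat option) \<Rightarrow> nat \<Rightarrow> nat \<Rightarrow> nat set" where
  "avail n k P i j = {c \<in> {1..k}.
      \<not> (\<exists>j'. entry n i j' \<and> P i j' = Some c) \<and> \<not> (\<exists>i'. entry n i' j \<and> P i' j = Some c)}"

definition uncolored :: "nat \<Rightarrow> (nat \<Rightarrow> nat \<Rightarrow> nat option) \<Rightarrow> nat \<Rightarrow> nat \<Rightarrow> bool" where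
  "uncolored n P i j \<longleftrightarrow> entry n i j \<and> P i j = None"

end

theory Submission
  imports Defs
begin

lemma row_card:
  assumes "U \<subseteq> {1..n}" "\<forall>j\<in>U. P i j = None"
  shows "card {c. \<exists>j. entry n i j \<and> P i j = Some c} \<le> n - card U"
proof -
  have "{c. \<exists>j. entry n i j \<and> P i j = Some c} \<subseteq> (\<lambda>j. the (P i j)) ` ({1..n} - U)"
    using assms unfolding entry_def by force
  hence "card {c. \<exists>j. entry n i j \<and> P i j = Some c} \<le> card ({1..n} - U)"
    by (meson card_image_le card_mono finite_Diff finite_atLeastAtMost finite_imageI le_trans)
  also have "\<dots> = n - card U" using assms(1)
    by (simp add: card_Diff_subset finite_subset)
  finally show ?thesis .
qed

lemma col_card:
  assumes "U \<subseteq> {1..n}" "\<forall>i\<in>U. P i j = None"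
  shows "card {c. \<exists>i. entry n i j \<and> P i j = Some c} \<le> n - card U"
proof -
  have "{c. \<exists>i. entry n i j \<and> P i j = Some c} \<subseteq> (\<lambda>i. the (P i j)) ` ({1..n} - U)"
    using assms unfolding entry_def by force
  hence "card {c. \<exists>i. entry n i j \<and> P i j = Some c} \<le> card ({1..n} - U)"
    by (meson card_image_le card_mono finite_Diff finite_atLeastAtMost finite_imageI le_trans)
  also have "\<dots> = n - card U" using assms(1)
    by (simp add: card_Diff_subset finite_subset)
  finally show ?thesis .
qed

lemma generic:
  assumes pc: "partial_coloring n (2*n-2) P"
    and u1: "uncolored n P r1 c1" and u2: "uncolored n P r1 c2"
    and u3: "uncolored n P r2 c2" and u4: "uncolored n P r2 c3"
    and d: "r1 \<noteq> r2" "c1 \<noteq> c2" "c2 \<noteq> c3" "c1 \<noteq> c3"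
    and au: "avail n (2*n-2) P r1 c1 = {a}"
    and av: "avail n (2*n-2) P r1 c2 = {a, b}"
    and aw: "avail n (2*n-2) P r2 c2 = {b, c}"
  shows False
proof -
  define K where "K = 2*n-2"
  define A where "A = {c. \<exists>j. entry n r2 j \<and> P r2 j = Some c}"
  define B where "B = {c. \<exists>i. entry n i c2 \<and> P i c2 = Some c}"
  define C where "C = {c. \<exists>j. entry n r1 j \<and> P r1 j = Some c}"
  define D where "D = {c. \<exists>i. entry n i c1 \<and> P i c1 = Some c}"
  have avail_eq: "\<And>i j. avail n K P i j = {x\<in>{1..K}. x \<notin> {c. \<exists>j'. entry n i j' \<and> P i j' = Some c}
      \<and> x \<notin> {c. \<exists>i'. entry n i' j \<and> P i' j = Some c}}"
    unfolding avail_def by auto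
  have e: "entry n r1 c1" "entry n r1 c2" "entry n r2 c2" "entry n r2 c3"
    using u1 u2 u3 u4 unfolding uncolored_def by auto
  hence n3: "n \<ge> 3" using d unfolding entry_def by auto
  have fin: "finite A" "finite B" "finite C" "finite D"
    using pc unfolding partial_coloring_def A_def B_def C_def D_def
    by (auto intro: finite_subset[of _ "{1..2*n-2}"])
  have cA: "card A \<le> n - card {c2, c3}"
    unfolding A_def by (rule row_card) (use e u3 u4 in \<open>auto simp: entry_def uncolored_def\<close>)
  have cB: "card B \<le> n - card {r1, r2}"
    unfolding B_def by (rule col_card) (use e u2 u3 in \<open>auto simp: entry_def uncolored_def\<close>)
  have cC: "card C \<le> n - card {c1, c2}"
    unfolding C_def by (rule row_card) (use e u1 u2 in \<open>auto simp: entry_def uncolored_def\<close>)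
  have cD: "card D \<le> n - card {r1}"
    unfolding D_def by (rule col_card) (use e u1 in \<open>auto simp: entry_def uncolored_def\<close>)
  have w: "{1..K} - {b, c} \<subseteq> A \<union> B" using aw avail_eq[of r2 c2]
    unfolding A_def B_def K_def by blast
  have "card ({1..K} - {b, c}) \<ge> card {1..K} - card {b,c}" by (rule diff_card_le_card_Diff) auto
  moreover have "card {b,c} \<le> 2" by (simp add: card_insert_le_m1)
  ultimately have cw: "card ({1..K} - {b, c}) \<ge> 2*n-4" unfolding K_def by simp
  have cAB: "card (A \<union> B) \<ge> 2*n-4" using cw w fin
    by (meson card_mono finite_UnI le_trans)
  have "card (A \<union> B) + card (A \<inter> B) = card A + card B" using fin card_Un_Int by metis
  hence "card (A \<inter> B) = 0" using cA cB cAB d n3 by simp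
  hence ABdisj: "A \<inter> B = {}" using fin by simp
  obtain dd where Pd: "P r2 c1 = Some dd"
  proof (cases "P r2 c1")
    case None
    have "card A \<le> n - card {c1, c2, c3}"
      unfolding A_def by (rule row_card) (use e u3 u4 None in \<open>auto simp: entry_def uncolored_def\<close>)
    hence "card A \<le> n - 3" using d by simp
    hence "card (A \<union> B) \<le> 2*n - 5" using cB d fin card_Un_le[of A B] n3 by simp
    thus ?thesis using cAB n3 by simp
  qed
  have ed: "entry n r2 c1" using e unfolding entry_def by auto
  have dA: "dd \<in> A" unfolding A_def using Pd ed by blast
  have dD: "dd \<in> D" unfolding D_def using Pd ed by blast
  have dK: "dd \<in> {1..K}" using pc Pd unfolding partial_coloring_def K_def by blast
  have "a \<in> avail n K P r1 c1" using au K_def by simp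
  hence "a \<notin> D" "a \<in> {1..K}" using avail_eq[of r1 c1] unfolding D_def by auto
  have "b \<in> avail n K P r2 c2" using aw K_def by simp
  hence "b \<notin> A" using avail_eq[of r2 c2] unfolding A_def by auto
  have u: "{1..K} - {a} \<subseteq> C \<union> D" using au avail_eq[of r1 c1]
    unfolding C_def D_def K_def by blast
  have "card ({1..K} - {a}) = 2*n-3" using \<open>a \<in> {1..K}\<close> unfolding K_def by simp
  hence cCD: "card (C \<union> D) \<ge> 2*n-3" using u fin by (metis card_mono finite_UnI)
  have "card (C \<union> D) + card (C \<inter> D) = card C + card D" using fin card_Un_Int by metis
  hence "card (C \<inter> D) = 0" using cC cD cCD d n3 by (simp del: card_0_eq)
  hence CDdisj: "C \<inter> D = {}" using fin by simp
  have "dd \<notin> avail n K P r1 c2"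
    using av K_def \<open>a \<notin> D\<close> dD dA \<open>b \<notin> A\<close> by auto
  hence "dd \<in> C \<union> B" using avail_eq[of r1 c2] dK unfolding C_def B_def by blast
  hence "dd \<in> C" using ABdisj dA by blast
  thus False using CDdisj dD by blast
qed

theorem lemma3:
  fixes n :: nat and P :: "nat \<Rightarrow> nat \<Rightarrow> nat option" and a b c k l :: nat
  assumes "partial_coloring n (2*n-2) P"
    and "uniquely_extends n (2*n-2) P"
    and "a \<in> {1..2*n-2}" "b \<in> {1..2*n-2}" "c \<in> {1..2*n-2}"
  shows "\<not> ((uncolored n P (k+1) (l+1) \<and> uncolored n P (k+1) (l+2) \<and>
             uncolored n P (k+2) (l+2) \<and> uncolored n P (k+2) (l+3) \<and>
             avail n (2*n-2) P (k+1) (l+1) = {a} \<and>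
             avail n (2*n-2) P (k+1) (l+2) = {a, b} \<and>
             avail n (2*n-2) P (k+2) (l+2) = {b, c})
          \<or> (uncolored n P (k+3) (l+2) \<and> uncolored n P (k+2) (l+2) \<and>
             uncolored n P (k+2) (l+1) \<and> uncolored n P (k+1) (l+1) \<and>
             avail n (2*n-2) P (k+3) (l+2) = {a} \<and>
             avail n (2*n-2) P (k+2) (l+2) = {a, b} \<and>
             avail n (2*n-2) P (k+2) (l+1) = {b, c}))"
proof
  assume H: "(uncolored n P (k+1) (l+1) \<and> uncolored n P (k+1) (l+2) \<and>
             uncolored n P (k+2) (l+2) \<and> uncolored n P (k+2) (l+3) \<and>
             avail n (2*n-2) P (k+1) (l+1) = {a} \<and>
             avail n (2*n-2) P (k+1) (l+2) = {a, b} \<and>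
             avail n (2*n-2) P (k+2) (l+2) = {b, c})
          \<or> (uncolored n P (k+3) (l+2) \<and> uncolored n P (k+2) (l+2) \<and>
             uncolored n P (k+2) (l+1) \<and> uncolored n P (k+1) (l+1) \<and>
             avail n (2*n-2) P (k+3) (l+2) = {a} \<and>
             avail n (2*n-2) P (k+2) (l+2) = {a, b} \<and>
             avail n (2*n-2) P (k+2) (l+1) = {b, c})"
  define Q where "Q = (\<lambda>i j. P j i)"
  have pcQ: "partial_coloring n (2*n-2) Q"
    using assms(1) unfolding partial_coloring_def Q_def entry_def by auto
  have uQ: "\<And>i j. uncolored n Q i j = uncolored n P j i"
    unfolding uncolored_def Q_def entry_def by auto
  have aQ: "\<And>K i j. avail n K Q i j = avail n K P j i"
    unfolding avail_def Q_def entry_def by auto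
  show False
    using H
  proof
    assume "uncolored n P (k+1) (l+1) \<and> uncolored n P (k+1) (l+2) \<and>
             uncolored n P (k+2) (l+2) \<and> uncolored n P (k+2) (l+3) \<and>
             avail n (2*n-2) P (k+1) (l+1) = {a} \<and>
             avail n (2*n-2) P (k+1) (l+2) = {a, b} \<and>
             avail n (2*n-2) P (k+2) (l+2) = {b, c}"
    thus False using generic[OF assms(1), of "k+1" "l+1" "l+2" "k+2" "l+3" a b c] by auto
  next
    assume h: "uncolored n P (k+3) (l+2) \<and> uncolored n P (k+2) (l+2) \<and>
             uncolored n P (k+2) (l+1) \<and> uncolored n P (k+1) (l+1) \<and>
             avail n (2*n-2) P (k+3) (l+2) = {a} \<and>
             avail n (2*n-2) P (k+2) (l+2) = {a, b} \<and>
             avail n (2*n-2) P (k+2) (l+1) = {b, c}"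
    show False using generic[OF pcQ, of "l+2" "k+3" "k+2" "l+1" "k+1" a b c] h
      by (simp add: uQ aQ)
  qed
qed

end
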